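(* Let $p\ge q$ and $n\ge 1$ be positive integers and let $B$ be a $p\times q$ matrix. Let $C$ be the $(nq+p)\times(nq+p)$ block matrix $$C=\begin{bmatrix} 0 & B & B & \cdots & B\\ B^T & 0 & I & \cdots & I\\ B^T & I & 0 & \cdots & I\\ \vdots & \vdots & \vdots & \ddots & \vdots\\ B^T & I & I & \cdots & 0\end{bmatrix}$$ (one block of size $p$ followed by $n$ blocks of size $q$), and let $D$ be the $(np+q)\times(np+q)$ block matrix $$D=\begin{bmatrix} 0 & B^T & B^T & \cdots & B^T\\ B & 0 & I & \cdots & I\\ B & I & 0 & \cdots & I\\ \vdots & \vdots & \vdots & \ddots & \vdots\\ B & I & I & \cdots & 0\end{bmatrix}$$ (one block of size $q$ followed by $n$ blocks of size $p$). Then $D\oplus 0_{p-q}$ and $C\oplus\underbrace{(J-I)_n\oplus\cdots\oplus(J-I)_n}_{p-q\text{ times}}$ are cospectral.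
   Context: $I$ denotes an identity matrix and $0$ a zero matrix of appropriate size; $0_m$ is the $m\times m$ zero matrix; $(J-I)_n$ is the $n\times n$ matrix with zeros on the diagonal and ones elsewhere. For matrices $X,Y$, $X\oplus Y=\begin{bmatrix} X&0\\0&Y\end{bmatrix}$. Two square matrices are cospectral if they have the same eigenvalues with the same multiplicities. *)

theory Defs
  imports "Jordan_Normal_Form.Matrix" "Jordan_Normal_Form.Char_Poly"
begin

definition dsum :: "'a::zero mat \<Rightarrow> 'a mat \<Rightarrow> 'a mat" where
  "dsum X Y = four_block_mat X (0\<^sub>m (dim_row X) (dim_col Y)) (0\<^sub>m (dim_row Y) (dim_col X)) Y"

definition JmI :: "nat \<Rightarrow> real mat" where
  "JmI n = mat n n (\<lambda>(i,j). if i = j then 0 else 1)"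

text \<open>Cospectral: square of the same size, and every (complex) eigenvalue has the
  same algebraic multiplicity (root multiplicity in the characteristic polynomial).\<close>
definition cospectral :: "real mat \<Rightarrow> real mat \<Rightarrow> bool" where
  "cospectral X Y \<longleftrightarrow> X \<in> carrier_mat (dim_row X) (dim_row X) \<and>
     Y \<in> carrier_mat (dim_row X) (dim_row X) \<and>
     (\<forall>z::complex. order z (char_poly (map_mat complex_of_real X)) =
                   order z (char_poly (map_mat complex_of_real Y)))"

text \<open>Generic block matrix: one leading block of size a, followed by n blocks of size b.
  Upper-right blocks are M (a x b), lower-left blocks are M^T, diagonal blocks 0,
  off-diagonal blocks among the n b-blocks are identities.\<close>
definition block_mat :: "nat \<Rightarrow> nat \<Rightarrow> nat \<Rightarrow> real mat \<Rightarrow> real mat" where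
  "block_mat n a b M = mat (n*b + a) (n*b + a) (\<lambda>(i,j).
     if i < a \<and> j < a then 0
     else if i < a then M $$ (i, (j - a) mod b)
     else if j < a then M $$ (j, (i - a) mod b)
     else if (i - a) div b = (j - a) div b then 0
     else if (i - a) mod b = (j - a) mod b then 1 else 0)"

definition C_mat :: "nat \<Rightarrow> nat \<Rightarrow> nat \<Rightarrow> real mat \<Rightarrow> real mat" where
  "C_mat n p q B = block_mat n p q B"

definition D_mat :: "nat \<Rightarrow> nat \<Rightarrow> nat \<Rightarrow> real mat \<Rightarrow> real mat" where
  "D_mat n p q B = block_mat n q p (transpose_mat B)"

end

theory Submission
  imports Defs
begin


lemma smult_one_mult: "A \<in> carrier_mat m k \<Longrightarrow> (x \<cdot>\<^sub>m 1\<^sub>m m) * A = (x::real) \<cdot>\<^sub>m A"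
  by (rule eq_matI) auto
lemma mult_smult_one: "A \<in> carrier_mat m k \<Longrightarrow> A * (x \<cdot>\<^sub>m 1\<^sub>m k) = (x::real) \<cdot>\<^sub>m A"
  by (rule eq_matI) auto

lemma sylv:
  fixes U V :: "real mat"
  assumes U: "U \<in> carrier_mat m k" and V: "V \<in> carrier_mat k m"
  shows "det (x \<cdot>\<^sub>m 1\<^sub>m m - U * V) * x^k = x^m * det (x \<cdot>\<^sub>m 1\<^sub>m k - V * U)"
proof -
  define N where "N = four_block_mat (x \<cdot>\<^sub>m 1\<^sub>m m) U V (1\<^sub>m k)"
  have N: "N \<in> carrier_mat (m+k) (m+k)" using U V by (simp add: N_def)
  define P1 where "P1 = four_block_mat (1\<^sub>m m) (0\<^sub>m m k) (-V) (1\<^sub>m k)"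
  define P2 where "P2 = four_block_mat (1\<^sub>m m) (-U) (0\<^sub>m k m) (x \<cdot>\<^sub>m 1\<^sub>m k)"
  have c1: "x \<cdot>\<^sub>m 1\<^sub>m m - U * V \<in> carrier_mat m m" using U V by auto
  have c2: "x \<cdot>\<^sub>m 1\<^sub>m k - V * U \<in> carrier_mat k k" using U V by auto
  have P1: "P1 \<in> carrier_mat (m+k) (m+k)" by (simp add: P1_def)
  have P2: "P2 \<in> carrier_mat (m+k) (m+k)" by (simp add: P2_def)
  have "N * P1 = four_block_mat (x \<cdot>\<^sub>m 1\<^sub>m m - U * V) U (0\<^sub>m k m) (1\<^sub>m k)"
    unfolding N_def P1_def
    apply (subst mult_four_block_mat[of _ m m _ k _ k _ _ m _ k])
    using U V by (auto intro!: cong_four_block_mat eq_matI simp: smult_one_mult mult_smult_one)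
  hence e1: "det N = det (x \<cdot>\<^sub>m 1\<^sub>m m - U * V)"
    using det_mult[OF N P1] det_four_block_mat_lower_left_zero[of "x \<cdot>\<^sub>m 1\<^sub>m m - U * V" m U k "0\<^sub>m k m" "1\<^sub>m k"]
      det_four_block_mat_upper_right_zero[of "1\<^sub>m m" m "0\<^sub>m m k" k "-V" "1\<^sub>m k"] U V c1
    by (auto simp: P1_def)
  have "N * P2 = four_block_mat (x \<cdot>\<^sub>m 1\<^sub>m m) (0\<^sub>m m k) V (x \<cdot>\<^sub>m 1\<^sub>m k - V * U)"
    unfolding N_def P2_def
    apply (subst mult_four_block_mat[of _ m m _ k _ k _ _ m _ k])
    using U V by (auto intro!: cong_four_block_mat eq_matI simp: smult_one_mult mult_smult_one)
  hence e2: "det N * x^k = x^m * det (x \<cdot>\<^sub>m 1\<^sub>m k - V * U)"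
    using det_mult[OF N P2] det_four_block_mat_upper_right_zero[of "x \<cdot>\<^sub>m 1\<^sub>m m" m "0\<^sub>m m k" k V "x \<cdot>\<^sub>m 1\<^sub>m k - V * U"]
      det_four_block_mat_lower_left_zero[of "1\<^sub>m m" m "-U" k "0\<^sub>m k m" "x \<cdot>\<^sub>m 1\<^sub>m k"] U V c2
    by (auto simp: P2_def)
  show ?thesis using e1 e2 by simp
qed



lemma schur:
  fixes U V :: "real mat"
  assumes U: "U \<in> carrier_mat a b" and V: "V \<in> carrier_mat b a"
  shows "det (four_block_mat (\<alpha> \<cdot>\<^sub>m 1\<^sub>m a) U V (\<beta> \<cdot>\<^sub>m 1\<^sub>m b)) * \<beta>^a
       = det ((\<alpha>*\<beta>) \<cdot>\<^sub>m 1\<^sub>m a - U * V) * \<beta>^b"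
proof -
  define N where "N = four_block_mat (\<alpha> \<cdot>\<^sub>m 1\<^sub>m a) U V (\<beta> \<cdot>\<^sub>m 1\<^sub>m b)"
  have N: "N \<in> carrier_mat (a+b) (a+b)" using U V by (simp add: N_def)
  define P1 where "P1 = four_block_mat (\<beta> \<cdot>\<^sub>m 1\<^sub>m a) (0\<^sub>m a b) (-V) (1\<^sub>m b)"
  have c1: "(\<alpha>*\<beta>) \<cdot>\<^sub>m 1\<^sub>m a - U * V \<in> carrier_mat a a" using U V by auto
  have P1: "P1 \<in> carrier_mat (a+b) (a+b)" by (simp add: P1_def)
  have "N * P1 = four_block_mat ((\<alpha>*\<beta>) \<cdot>\<^sub>m 1\<^sub>m a - U * V) U (0\<^sub>m b a) (\<beta> \<cdot>\<^sub>m 1\<^sub>m b)"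
    unfolding N_def P1_def
    apply (subst mult_four_block_mat[of _ a a _ b _ b _ _ a _ b])
    using U V by (auto intro!: cong_four_block_mat eq_matI simp: smult_one_mult mult_smult_one)
  hence e1: "det N * \<beta>^a = det ((\<alpha>*\<beta>) \<cdot>\<^sub>m 1\<^sub>m a - U * V) * \<beta>^b"
    using det_mult[OF N P1] det_four_block_mat_lower_left_zero[of "(\<alpha>*\<beta>) \<cdot>\<^sub>m 1\<^sub>m a - U * V" a U b "0\<^sub>m b a" "\<beta> \<cdot>\<^sub>m 1\<^sub>m b"]
      det_four_block_mat_upper_right_zero[of "\<beta> \<cdot>\<^sub>m 1\<^sub>m a" a "0\<^sub>m a b" b "-V" "1\<^sub>m b"] U V c1
    by (auto simp: P1_def)
  thus ?thesis by (simp add: N_def)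
qed

definition Emat :: "nat \<Rightarrow> nat \<Rightarrow> real mat" where
  "Emat n b = mat (n*b) b (\<lambda>(i,j). if i mod b = j then 1 else 0)"

lemma Emat_carrier[simp]: "Emat n b \<in> carrier_mat (n*b) b"
  by (simp add: Emat_def)
lemma Emat_dims[simp]: "dim_row (Emat n b) = n*b" "dim_col (Emat n b) = b"
  by (simp_all add: Emat_def)

lemma sum_mod_count: "i < b \<Longrightarrow> (\<Sum>k\<in>{0..<n*b}. (if k mod b = i then 1 else 0::real)) = real n"
proof (induction n)
  case 0 then show ?case by simp
next
  case (Suc n)
  have "{0..<Suc n * b} = {0..<n*b} \<union> {n*b..<n*b+b}" by auto
  hence "(\<Sum>k\<in>{0..<Suc n*b}. (if k mod b = i then 1 else 0::real))
     = (\<Sum>k\<in>{0..<n*b}. (if k mod b = i then 1 else 0::real)) + (\<Sum>k\<in>{n*b..<n*b+b}. (if k mod b = i then 1 else 0::real))"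
    by (simp add: sum.union_disjoint)
  also have "(\<Sum>k\<in>{n*b..<n*b+b}. (if k mod b = i then 1 else 0::real)) = (\<Sum>r\<in>{0..<b}. (if (r + n*b) mod b = i then 1 else 0::real))"
    by (subst sum.shift_bounds_nat_ivl[symmetric]) (simp add: add.commute)
  also have "\<dots> = (\<Sum>r\<in>{0..<b}. (if r = i then 1 else 0::real))"
    by (rule sum.cong) auto
  also have "\<dots> = 1" using Suc.prems by simp
  finally show ?case using Suc by simp
qed

lemma ME_T: assumes M: "M \<in> carrier_mat a b" and i: "i < a" and j: "j < n*b"
  shows "(M * transpose_mat (Emat n b)) $$ (i,j) = M $$ (i, j mod b)"
proof -
  have b: "b > 0" using j by (cases b) auto
  have "(M * transpose_mat (Emat n b)) $$ (i,j) = (\<Sum>k\<in>{0..<b}. M $$ (i,k) * (if j mod b = k then 1 else 0))"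
    using M i j by (simp add: scalar_prod_def Emat_def)
  also have "\<dots> = (\<Sum>k\<in>{0..<b}. (if j mod b = k then M $$ (i,k) else 0))"
    by (rule sum.cong) auto
  also have "\<dots> = M $$ (i, j mod b)" using b by simp
  finally show ?thesis .
qed

lemma EM_T: assumes M: "M \<in> carrier_mat a b" and i: "i < n*b" and j: "j < a"
  shows "(Emat n b * transpose_mat M) $$ (i,j) = M $$ (j, i mod b)"
proof -
  have b: "b > 0" using i by (cases b) auto
  have "(Emat n b * transpose_mat M) $$ (i,j) = (\<Sum>k\<in>{0..<b}. (if i mod b = k then 1 else 0) * M $$ (j,k))"
    using M i j by (simp add: scalar_prod_def Emat_def)
  also have "\<dots> = (\<Sum>k\<in>{0..<b}. (if i mod b = k then M $$ (j,k) else 0))"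
    by (rule sum.cong) auto
  also have "\<dots> = M $$ (j, i mod b)" using b by simp
  finally show ?thesis .
qed

lemma EE_T: assumes i: "i < n*b" and j: "j < n*b"
  shows "(Emat n b * transpose_mat (Emat n b)) $$ (i,j) = (if i mod b = j mod b then 1 else 0)"
proof -
  have b: "b > 0" using i by (cases b) auto
  have "(Emat n b * transpose_mat (Emat n b)) $$ (i,j) = (\<Sum>k\<in>{0..<b}. (if i mod b = k then 1 else 0) * (if j mod b = k then 1 else (0::real)))"
    using i j by (simp add: scalar_prod_def Emat_def)
  also have "\<dots> = (\<Sum>k\<in>{0..<b}. (if i mod b = k then (if j mod b = k then 1 else 0) else 0))"
    by (rule sum.cong) auto
  also have "\<dots> = (if i mod b = j mod b then 1 else 0)" using b by simp
  finally show ?thesis .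
qed

lemma ET_E: "transpose_mat (Emat n b) * Emat n b = real n \<cdot>\<^sub>m 1\<^sub>m b"
proof (rule eq_matI)
  fix i j assume i: "i < dim_row (real n \<cdot>\<^sub>m 1\<^sub>m b)" and j: "j < dim_col (real n \<cdot>\<^sub>m 1\<^sub>m b)"
  hence i: "i < b" and j: "j < b" by auto
  have "(transpose_mat (Emat n b) * Emat n b) $$ (i,j) = (\<Sum>k\<in>{0..<n*b}. (if k mod b = i then 1 else 0) * (if k mod b = j then 1 else (0::real)))"
    using i j by (simp add: scalar_prod_def Emat_def)
  also have "\<dots> = (if i = j then (\<Sum>k\<in>{0..<n*b}. (if k mod b = i then 1 else 0::real)) else 0)"
    by (cases "i = j") (auto intro!: sum.neutral sum.cong)
  also have "\<dots> = (real n \<cdot>\<^sub>m 1\<^sub>m b) $$ (i,j)" using i j sum_mod_count[OF i, of n] by (cases "i = j") auto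
  finally show "(transpose_mat (Emat n b) * Emat n b) $$ (i,j) = (real n \<cdot>\<^sub>m 1\<^sub>m b) $$ (i,j)" .
qed auto



lemma divmod_aux: fixes i j b :: nat
  shows "(if i div b = j div b then 0 else if i mod b = j mod b then 1 else 0) + (if i = j then 1 else 0)
     = (if i mod b = j mod b then 1 else (0::real))"
proof -
  have "i div b = j div b \<Longrightarrow> i mod b = j mod b \<Longrightarrow> i = j"
    by (metis div_mult_mod_eq)
  thus ?thesis by auto
qed

definition Fm :: "nat \<Rightarrow> nat \<Rightarrow> nat \<Rightarrow> real mat" where
  "Fm n a b = four_block_mat (1\<^sub>m a) (0\<^sub>m a b) (0\<^sub>m (n*b) a) (Emat n b)"
definition Km :: "nat \<Rightarrow> nat \<Rightarrow> nat \<Rightarrow> real mat \<Rightarrow> real mat" where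
  "Km n a b M = four_block_mat (1\<^sub>m a) (M * transpose_mat (Emat n b)) (transpose_mat M) (transpose_mat (Emat n b))"

lemma Fm_carrier: "Fm n a b \<in> carrier_mat (a + n*b) (a+b)" by (simp add: Fm_def)
lemma Km_carrier: "M \<in> carrier_mat a b \<Longrightarrow> Km n a b M \<in> carrier_mat (a+b) (a + n*b)" by (simp add: Km_def)

lemma FK: assumes M: "M \<in> carrier_mat a b"
  shows "block_mat n a b M + 1\<^sub>m (n*b+a) = Fm n a b * Km n a b M"
proof -
  have "Fm n a b * Km n a b M = four_block_mat (1\<^sub>m a) (M * transpose_mat (Emat n b))
       (Emat n b * transpose_mat M) (Emat n b * transpose_mat (Emat n b))"
    unfolding Fm_def Km_def
    apply (subst mult_four_block_mat[of _ a a _ b _ "n*b" _ _ a _ "n*b"])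
    using M by auto
  also have "\<dots> = block_mat n a b M + 1\<^sub>m (n*b+a)"
  proof (rule eq_matI)
    fix i j assume i: "i < dim_row (block_mat n a b M + 1\<^sub>m (n*b+a))"
      and j: "j < dim_col (block_mat n a b M + 1\<^sub>m (n*b+a))"
    hence i: "i < n*b+a" and j: "j < n*b+a" by (auto simp: block_mat_def)
    show "four_block_mat (1\<^sub>m a) (M * transpose_mat (Emat n b))
       (Emat n b * transpose_mat M) (Emat n b * transpose_mat (Emat n b)) $$ (i,j) =
       (block_mat n a b M + 1\<^sub>m (n*b+a)) $$ (i,j)"
    proof -
      have d: "dim_row (1\<^sub>m a :: real mat) = a" "dim_col (1\<^sub>m a :: real mat) = a" by auto
      have ij: "i < dim_row (1\<^sub>m a :: real mat) + dim_row (Emat n b * transpose_mat (Emat n b))"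
           "j < dim_col (1\<^sub>m a :: real mat) + dim_col (Emat n b * transpose_mat (Emat n b))"
        using i j by auto
      have r: "(block_mat n a b M + 1\<^sub>m (n*b+a)) $$ (i,j) = block_mat n a b M $$ (i,j) + (if i = j then 1 else 0)"
        using i j by (simp add: block_mat_def)
      note e = index_mat_four_block(1)[OF ij, unfolded d] r
      show ?thesis
      proof (cases "i < a"; cases "j < a")
        assume "i < a" "j < a" thus ?thesis using i j by (simp add: e block_mat_def)
      next
        assume "i < a" "\<not> j < a" thus ?thesis using i j M by (simp add: e block_mat_def ME_T del: index_mult_mat)
      next
        assume "\<not> i < a" "j < a" thus ?thesis using i j M by (simp add: e block_mat_def EM_T del: index_mult_mat)
      next
        assume ia: "\<not> i < a" and ja: "\<not> j < a"
        have b1: "block_mat n a b M $$ (i,j) = (if (i-a) div b = (j-a) div b then 0 else if (i-a) mod b = (j-a) mod b then 1 else 0)"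
          using i j ia ja by (simp add: block_mat_def)
        have b2: "(if i = j then 1 else 0) = (if i-a = j-a then 1 else (0::real))" using ia ja by auto
        have b3: "(Emat n b * transpose_mat (Emat n b)) $$ (i - a, j - a) = (if (i-a) mod b = (j-a) mod b then 1 else 0)"
          using i j ia ja by (intro EE_T) auto
        show ?thesis using ia ja unfolding e b1 b2 b3 divmod_aux by simp
      qed
    qed
  qed (auto simp: block_mat_def)
  finally show ?thesis by simp
qed

lemma KF: assumes M: "M \<in> carrier_mat a b"
  shows "Km n a b M * Fm n a b = four_block_mat (1\<^sub>m a) (real n \<cdot>\<^sub>m M) (transpose_mat M) (real n \<cdot>\<^sub>m 1\<^sub>m b)"
proof -
  have "Km n a b M * Fm n a b = four_block_mat (1\<^sub>m a) (M * transpose_mat (Emat n b) * Emat n b)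
       (transpose_mat M) (transpose_mat (Emat n b) * Emat n b)"
    unfolding Fm_def Km_def
    apply (subst mult_four_block_mat[of _ a a _ "n*b" _ b _ _ a _ b])
    using M by auto
  also have "M * transpose_mat (Emat n b) * Emat n b = real n \<cdot>\<^sub>m M"
    using M by (simp add: assoc_mult_mat[of M a b _ "n*b" _ b] ET_E mult_smult_one)
  finally show ?thesis by (simp add: ET_E)
qed

lemma block_eval: assumes M: "M \<in> carrier_mat a b"
  shows "det (x \<cdot>\<^sub>m 1\<^sub>m (n*b+a) - (block_mat n a b M + 1\<^sub>m (n*b+a))) * x^(a+b) * (x - real n)^a
    = x^(n*b+a) * det (((x-1)*(x - real n)) \<cdot>\<^sub>m 1\<^sub>m a - real n \<cdot>\<^sub>m (M * transpose_mat M)) * (x - real n)^b"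
proof -
  have F: "Fm n a b \<in> carrier_mat (n*b+a) (a+b)" using Fm_carrier[of n a b] by (simp add: add.commute)
  have K: "Km n a b M \<in> carrier_mat (a+b) (n*b+a)" using Km_carrier[OF M, of n] by (simp add: add.commute)
  have s: "det (x \<cdot>\<^sub>m 1\<^sub>m (n*b+a) - Fm n a b * Km n a b M) * x^(a+b) = x^(n*b+a) * det (x \<cdot>\<^sub>m 1\<^sub>m (a+b) - Km n a b M * Fm n a b)"
    by (rule sylv[OF F K])
  have e: "x \<cdot>\<^sub>m 1\<^sub>m (a+b) - Km n a b M * Fm n a b
     = four_block_mat ((x-1) \<cdot>\<^sub>m 1\<^sub>m a) (- (real n \<cdot>\<^sub>m M)) (- transpose_mat M) ((x - real n) \<cdot>\<^sub>m 1\<^sub>m b)"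
    unfolding KF[OF M] using M by (auto intro!: eq_matI)
  have sc: "det (four_block_mat ((x-1) \<cdot>\<^sub>m 1\<^sub>m a) (- (real n \<cdot>\<^sub>m M)) (- transpose_mat M) ((x - real n) \<cdot>\<^sub>m 1\<^sub>m b)) * (x - real n)^a
     = det (((x-1)*(x - real n)) \<cdot>\<^sub>m 1\<^sub>m a - (- (real n \<cdot>\<^sub>m M)) * (- transpose_mat M)) * (x - real n)^b"
    by (rule schur) (use M in auto)
  have uv: "(- (real n \<cdot>\<^sub>m M)) * (- transpose_mat M) = real n \<cdot>\<^sub>m (M * transpose_mat M)"
    using M by (auto intro!: eq_matI)
  show ?thesis
    using s sc unfolding FK[OF M, symmetric] e uv by (simp add: mult.assoc)
qed



definition ev :: "real mat \<Rightarrow> real \<Rightarrow> real" where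
  "ev A y = det (y \<cdot>\<^sub>m 1\<^sub>m (dim_row A) - A)"

lemma ev_char: "A \<in> carrier_mat N N \<Longrightarrow> poly (char_poly A) y = ev A y"
proof -
  assume A: "A \<in> carrier_mat N N"
  have "- char_matrix A y = y \<cdot>\<^sub>m 1\<^sub>m N - A" using A
    by (auto intro!: eq_matI simp: char_matrix_def)
  thus ?thesis using char_poly_matrix[OF A, of y] A by (simp add: ev_def)
qed

lemma ev_shift: "A \<in> carrier_mat N N \<Longrightarrow> ev A y = det ((y+1) \<cdot>\<^sub>m 1\<^sub>m N - (A + 1\<^sub>m N))"
proof -
  assume A: "A \<in> carrier_mat N N"
  have "(y+1) \<cdot>\<^sub>m 1\<^sub>m N - (A + 1\<^sub>m N) = y \<cdot>\<^sub>m 1\<^sub>m N - A" using A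
    by (auto intro!: eq_matI)
  thus ?thesis using A by (simp add: ev_def)
qed

lemma dsum_carrier: "A \<in> carrier_mat r r \<Longrightarrow> B \<in> carrier_mat s s \<Longrightarrow> dsum A B \<in> carrier_mat (r+s) (r+s)"
  by (simp add: dsum_def)

lemma ev_dsum: assumes A: "A \<in> carrier_mat r r" and B: "B \<in> carrier_mat s s"
  shows "ev (dsum A B) y = ev A y * ev B y"
proof -
  have "y \<cdot>\<^sub>m 1\<^sub>m (dim_row (dsum A B)) - dsum A B
     = four_block_mat (y \<cdot>\<^sub>m 1\<^sub>m r - A) (0\<^sub>m r s) (0\<^sub>m s r) (y \<cdot>\<^sub>m 1\<^sub>m s - B)"
    using A B by (auto intro!: eq_matI simp: dsum_def)
  moreover have "det \<dots> = det (y \<cdot>\<^sub>m 1\<^sub>m r - A) * det (y \<cdot>\<^sub>m 1\<^sub>m s - B)"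
    by (rule det_four_block_mat_upper_right_zero) (use A B in auto)
  ultimately show ?thesis using A B by (simp add: ev_def)
qed

lemma ev_zero: "ev (0\<^sub>m r r) y = y^r"
proof -
  have "y \<cdot>\<^sub>m 1\<^sub>m r - 0\<^sub>m r r = y \<cdot>\<^sub>m 1\<^sub>m r" by (auto intro!: eq_matI)
  thus ?thesis by (simp add: ev_def)
qed

lemma diag_rep: assumes A: "A \<in> carrier_mat m m"
  shows "diag_block_mat (replicate k A) \<in> carrier_mat (k*m) (k*m) \<and> ev (diag_block_mat (replicate k A)) y = ev A y ^ k"
proof (induction k)
  case 0
  have "y \<cdot>\<^sub>m 1\<^sub>m 0 - 0\<^sub>m 0 0 \<in> carrier_mat 0 0" by auto
  then show ?case by (simp add: ev_def del: minus_carrier_mat)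
next
  case (Suc k)
  have eq: "diag_block_mat (replicate (Suc k) A) = dsum A (diag_block_mat (replicate k A))"
    by (simp add: dsum_def Let_def)
  show ?case unfolding eq using Suc A dsum_carrier[OF A, of _ "k*m"] ev_dsum[OF A, of _ "k*m"] by auto
qed

lemma block_carrier: "block_mat n a b M \<in> carrier_mat (n*b+a) (n*b+a)"
  by (simp add: block_mat_def)

lemma JmI_block: "JmI n = block_mat n 0 1 (0\<^sub>m 0 1)"
  by (auto intro!: eq_matI simp: JmI_def block_mat_def)

lemma block_ev: assumes M: "M \<in> carrier_mat a b"
  shows "ev (block_mat n a b M) y * (y+1)^(a+b) * ((y+1) - real n)^a
    = (y+1)^(n*b+a) * det ((y*((y+1) - real n)) \<cdot>\<^sub>m 1\<^sub>m a - real n \<cdot>\<^sub>m (M * transpose_mat M)) * ((y+1) - real n)^b"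
  using block_eval[OF M, of "y+1" n] ev_shift[OF block_carrier] by simp



theorem theorem3p15:
  fixes n p q :: nat and B :: "real mat"
  assumes "q \<ge> 1" and "p \<ge> q" and "n \<ge> 1" and "B \<in> carrier_mat p q"
  shows "cospectral (dsum (D_mat n p q B) (0\<^sub>m (p - q) (p - q)))
                    (dsum (C_mat n p q B) (diag_block_mat (replicate (p - q) (JmI n))))"
proof -
  note B = assms(4)
  define d where "d = p - q"
  have pd: "p = q + d" using assms(2) by (simp add: d_def)
  define L where "L = dsum (D_mat n p q B) (0\<^sub>m d d)"
  define R where "R = dsum (C_mat n p q B) (diag_block_mat (replicate d (JmI n)))"
  define N where "N = n*p+q+d"
  have BT: "transpose_mat B \<in> carrier_mat q p" using B by simp
  have Dc: "D_mat n p q B \<in> carrier_mat (n*p+q) (n*p+q)" by (simp add: D_mat_def block_carrier)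
  have Cc: "C_mat n p q B \<in> carrier_mat (n*q+p) (n*q+p)" by (simp add: C_mat_def block_carrier)
  have Jc: "JmI n \<in> carrier_mat (n*1+0) (n*1+0)" by (simp add: JmI_def)
  note JR = diag_rep[OF Jc, of d]
  have Lc: "L \<in> carrier_mat N N" unfolding L_def N_def by (rule dsum_carrier[OF Dc]) simp
  have Rc: "R \<in> carrier_mat N N" 
  proof -
    have "R \<in> carrier_mat (n*q+p + d*(n*1+0)) (n*q+p + d*(n*1+0))"
      unfolding R_def by (rule dsum_carrier[OF Cc]) (use JR in auto)
    moreover have "n*q+p + d*(n*1+0) = N" unfolding N_def pd by (simp add: algebra_simps)
    ultimately show ?thesis by simp
  qed
  have key: "ev L y = ev R y" if y0: "y \<noteq> 0" and y1: "y + 1 \<noteq> 0" and yn: "y + 1 \<noteq> real n" for y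
  proof -
    define x where "x = y + 1"
    define s where "s = x - real n"
    define c where "c = y * s"
    have x0: "x \<noteq> 0" and s0: "s \<noteq> 0" and c0: "c \<noteq> 0" using y0 y1 yn by (auto simp: x_def s_def c_def)
    define Dp where "Dp = det (c \<cdot>\<^sub>m 1\<^sub>m p - real n \<cdot>\<^sub>m (B * transpose_mat B))"
    define Dq where "Dq = det (c \<cdot>\<^sub>m 1\<^sub>m q - real n \<cdot>\<^sub>m (transpose_mat B * B))"
    define GC where "GC = ev (C_mat n p q B) y"
    define GD where "GD = ev (D_mat n p q B) y"
    define GJ where "GJ = ev (JmI n) y"
    have hC: "GC * x^(p+q) * s^p = x^(n*q+p) * Dp * s^q"
      using block_ev[OF B, of n y] unfolding GC_def C_mat_def Dp_def c_def s_def x_def by simp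
    have hD: "GD * x^(q+p) * s^q = x^(n*p+q) * Dq * s^p"
      using block_ev[OF BT, of n y] unfolding GD_def D_mat_def Dq_def c_def s_def x_def by simp
    have hJ: "GJ * x = x^n * s"
    proof -
      have "(0\<^sub>m 0 1 :: real mat) \<in> carrier_mat 0 1" by simp
      note h = block_ev[OF this, of n y]
      have "(y * (y + 1 - real n)) \<cdot>\<^sub>m 1\<^sub>m 0 - real n \<cdot>\<^sub>m (0\<^sub>m 0 1 * transpose_mat (0\<^sub>m 0 1)) \<in> carrier_mat 0 0"
        by auto
      hence "det ((y * (y + 1 - real n)) \<cdot>\<^sub>m 1\<^sub>m 0 - real n \<cdot>\<^sub>m (0\<^sub>m 0 1 * transpose_mat (0\<^sub>m 0 1))) = 1"
        by (rule det_dim_zero)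
      with h show ?thesis unfolding GJ_def JmI_block x_def s_def by simp
    qed
    have hS: "Dp * c^q = c^p * Dq"
    proof -
      have U: "real n \<cdot>\<^sub>m B \<in> carrier_mat p q" using B by simp
      have "det (c \<cdot>\<^sub>m 1\<^sub>m p - (real n \<cdot>\<^sub>m B) * transpose_mat B) * c^q = c^p * det (c \<cdot>\<^sub>m 1\<^sub>m q - transpose_mat B * (real n \<cdot>\<^sub>m B))"
        by (rule sylv[OF U BT])
      moreover have "(real n \<cdot>\<^sub>m B) * transpose_mat B = real n \<cdot>\<^sub>m (B * transpose_mat B)"
        using B by (simp add: mult_smult_assoc_mat[OF B BT])
      moreover have "transpose_mat B * (real n \<cdot>\<^sub>m B) = real n \<cdot>\<^sub>m (transpose_mat B * B)"
        using B by (simp add: mult_smult_distrib[OF BT B])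
      ultimately show ?thesis unfolding Dp_def Dq_def by simp
    qed
    have GJ: "GJ = x^(n-1) * s"
    proof -
      have "x^n = x^(n-1) * x" using assms(3) by (cases n) (auto simp: power_Suc2)
      hence "GJ * x = (x^(n-1) * s) * x" using hJ by (simp add: mult_ac)
      thus ?thesis using x0 by simp
    qed
    have DP: "Dp = c^d * Dq"
    proof -
      have "Dp * c^q = (c^d * Dq) * c^q" using hS pd by (simp add: power_add algebra_simps)
      thus ?thesis using c0 by simp
    qed
    have GCe: "GC = x^((n-1)*q) * y^d * Dq"
    proof -
      have e1: "x^(n*q+p) = x^((n-1)*q) * x^(p+q)"
      proof -
        have "n*q+p = (n-1)*q + (p+q)" using assms(3) by (cases n) auto
        thus ?thesis by (simp add: power_add)
      qed
      have sp: "s^p = s^d * s^q" using pd by (simp add: power_add)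
      have "GC * (x^(p+q) * s^p) = x^(n*q+p) * Dp * s^q" using hC by (simp add: mult.assoc)
      also have "\<dots> = x^((n-1)*q) * x^(p+q) * ((y^d * s^d) * Dq) * s^q"
        unfolding e1 DP c_def power_mult_distrib ..
      also have "\<dots> = (x^((n-1)*q) * y^d * Dq) * (x^(p+q) * (s^d * s^q))" by (simp add: mult_ac)
      finally have "GC * (x^(p+q) * s^p) = (x^((n-1)*q) * y^d * Dq) * (x^(p+q) * s^p)" unfolding sp .
      thus ?thesis using x0 s0 by simp
    qed
    have GDe: "GD = x^((n-1)*p) * Dq * s^d"
    proof -
      have e1: "x^(n*p+q) = x^((n-1)*p) * x^(q+p)"
      proof -
        have "n*p+q = (n-1)*p + (q+p)" using assms(3) by (cases n) auto
        thus ?thesis by (simp add: power_add)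
      qed
      have sp: "s^p = s^d * s^q" using pd by (simp add: power_add)
      have "GD * (x^(q+p) * s^q) = x^(n*p+q) * Dq * s^p" using hD by (simp add: mult.assoc)
      also have "\<dots> = x^((n-1)*p) * x^(q+p) * Dq * (s^d * s^q)" unfolding e1 sp ..
      also have "\<dots> = (x^((n-1)*p) * Dq * s^d) * (x^(q+p) * s^q)" by (simp add: mult_ac)
      finally show ?thesis using x0 s0 by simp
    qed
    have "ev L y = GD * y^d" unfolding L_def GD_def using ev_dsum[OF Dc, of "0\<^sub>m d d" d] ev_zero by simp
    moreover have "ev R y = GC * GJ^d" unfolding R_def GC_def GJ_def using ev_dsum[OF Cc, of _ "d*(n*1+0)"] JR by simp
    moreover have "(n-1)*p = (n-1)*q + (n-1)*d" using pd by (simp add: distrib_left)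
    moreover have "x^((n-1)*d) = (x^(n-1))^d" by (simp add: power_mult)
    ultimately show ?thesis unfolding GDe GCe GJ by (simp add: power_add power_mult_distrib mult_ac)
  qed
  have PE: "char_poly L = char_poly R"
  proof (rule ccontr)
    assume ne: "char_poly L \<noteq> char_poly R"
    hence "char_poly L - char_poly R \<noteq> 0" by simp
    hence fin: "finite {y. poly (char_poly L - char_poly R) y = 0}" by (rule poly_roots_finite)
    have "UNIV - {0, -1, real n - 1} \<subseteq> {y. poly (char_poly L - char_poly R) y = 0}"
    proof
      fix y :: real assume "y \<in> UNIV - {0, -1, real n - 1}"
      hence "y \<noteq> 0" "y + 1 \<noteq> 0" "y + 1 \<noteq> real n" by auto
      thus "y \<in> {y. poly (char_poly L - char_poly R) y = 0}"
        using key ev_char[OF Lc] ev_char[OF Rc] by simp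
    qed
    hence "finite (UNIV - {0, -1, real n - 1} :: real set)" using fin finite_subset by blast
    hence "finite (UNIV :: real set)" by simp
    thus False using infinite_UNIV_char_0[where 'a=real] by simp
  qed
  have dL: "dim_row L = N" using Lc by simp
  have CP: "char_poly (map_mat complex_of_real L) = char_poly (map_mat complex_of_real R)"
    unfolding of_real_hom.char_poly_hom[OF Lc] of_real_hom.char_poly_hom[OF Rc] PE ..
  show ?thesis
    unfolding L_def[symmetric] d_def[symmetric] R_def[symmetric] cospectral_def dL
    using Lc Rc CP by simp
qed

end
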